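(* Let $n\ge 2$ be an integer. The Heyting algebra $\mathbb{X}_n^{\ast}$ is infinite and $(n+1)$-generated. Consequently, the variety $\mathbb{V}(\mathbb{X}_n^\ast)$ generated by $\mathbb{X}_n^\ast$ is not locally finite.
   Context: $\mathbb{N}=\{0,1,2,\dots\}$. Fix an integer $n\ge 2$ and put $N=2^{n+1}-1$. Let $T_n$ be the set of triples $\langle k_1,k_2,k_3\rangle$ of pairwise distinct natural numbers $\le N$, with a fixed enumeration $T_n=\{s_0,\dots,s_t\}$. Let $U_n$ be a set of pairwise distinct elements $a_m,b_m$ ($m\in\mathbb{N}$) and $c_{m,k},d_{m,k},e^a_{m,k},e^b_{m,k}$ ($m\in\mathbb{N}$, $0\le k\le N$). Define $x\prec y$ on $U_n$ iff one of: (1) $x=a_m$ and $y\in\{c_{m,k_1},c_{m,k_2}\}$, where $s_j=\langle k_1,k_2,k_3\rangle$ with $j\equiv m \bmod (t+1)$; (2) $x=b_m$ and $y\in\{c_{m,k_1},c_{m,k_3}\}$, with $s_j$ as in (1); (3) $m\ge1$, $x=c_{m,k}$, and either $y=e^a_{m-1,j}$ with $j\ne k$, or $y=e^b_{m-1,i}$ for any $i\le N$; (4) $x=d_{m,k}$ and $y=c_{m,j}$ with $j\neq k$; (5) $x=e^a_{m,k}$ and either $y=a_m$ or $y=d_{m,j}$ with $j\ne k$; (6) $x=e^b_{m,k}$ and either $y=b_m$ or $y=d_{m,j}$ with $j\ne k$. Let $\le$ be the reflexive transitive closure of $\prec$. The $n$-abomination $\mathbb{X}_n$ is the poset $U_n\cup\{\bot\}$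 where $\bot$ is a new least element, with the topology in which $U$ is open iff $\bot\notin U$ or $U$ is cofinite; it is an Esakia space. $\mathbb{X}_n^\ast$ denotes its Esakia dual, the Heyting algebra of clopen upsets of $\mathbb{X}_n$ (with intersection, union, $0=\emptyset$, $1=X_n$, and $U\to V = X_n\setminus{\downarrow}(U\setminus V)$). A variety is locally finite if its finitely generated members are finite. *)

theory Defs
  imports Main
begin

record 'a halg =
  hcar  :: "'a set"
  hmeet :: "'a \<Rightarrow> 'a \<Rightarrow> 'a"
  hjoin :: "'a \<Rightarrow> 'a \<Rightarrow> 'a"
  himp  :: "'a \<Rightarrow> 'a \<Rightarrow> 'a"
  hbot  :: 'a
  htop  :: 'a

datatype hterm = TVar nat | TBot | TTop | TMeet hterm hterm | TJoin hterm hterm | TImp hterm hterm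

fun heval :: "'a halg \<Rightarrow> (nat \<Rightarrow> 'a) \<Rightarrow> hterm \<Rightarrow> 'a" where
  "heval A v (TVar i) = v i"
| "heval A v TBot = hbot A"
| "heval A v TTop = htop A"
| "heval A v (TMeet s t) = hmeet A (heval A v s) (heval A v t)"
| "heval A v (TJoin s t) = hjoin A (heval A v s) (heval A v t)"
| "heval A v (TImp s t) = himp A (heval A v s) (heval A v t)"

definition satisfies :: "'a halg \<Rightarrow> hterm \<Rightarrow> hterm \<Rightarrow> bool" where
  "satisfies A s t \<longleftrightarrow> (\<forall>v. (\<forall>i. v i \<in> hcar A) \<longrightarrow> heval A v s = heval A v t)"

definition is_alg :: "'a halg \<Rightarrow> bool" where
  "is_alg A \<longleftrightarrow> hcar A \<noteq> {} \<and> hbot A \<in> hcar A \<and> htop A \<in> hcar A \<and>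
     (\<forall>x\<in>hcar A. \<forall>y\<in>hcar A. hmeet A x y \<in> hcar A \<and> hjoin A x y \<in> hcar A \<and> himp A x y \<in> hcar A)"

text \<open>Membership in the variety generated by A, via Birkhoff's HSP theorem:
  algebras satisfying every identity valid in A.\<close>
definition in_variety :: "'a halg \<Rightarrow> 'b halg \<Rightarrow> bool" where
  "in_variety A B \<longleftrightarrow> is_alg B \<and> (\<forall>s t. satisfies A s t \<longrightarrow> satisfies B s t)"

inductive_set generated :: "'a halg \<Rightarrow> 'a set \<Rightarrow> 'a set" for A G where
  gen_base: "x \<in> G \<Longrightarrow> x \<in> generated A G"
| gen_bot: "hbot A \<in> generated A G"
| gen_top: "htop A \<in> generated A G"
| gen_meet: "x \<in> generated A G \<Longrightarrow> y \<in> generated A G \<Longrightarrow> hmeet A x y \<in> generated A G"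
| gen_join: "x \<in> generated A G \<Longrightarrow> y \<in> generated A G \<Longrightarrow> hjoin A x y \<in> generated A G"
| gen_imp: "x \<in> generated A G \<Longrightarrow> y \<in> generated A G \<Longrightarrow> himp A x y \<in> generated A G"

definition finitely_generated :: "'a halg \<Rightarrow> bool" where
  "finitely_generated A \<longleftrightarrow> (\<exists>G. finite G \<and> G \<subseteq> hcar A \<and> generated A G = hcar A)"

text \<open>Members are tested on the carrier type of A (sufficient when it is infinite, since
  finitely generated algebras are countable).\<close>
definition variety_locally_finite :: "'a halg \<Rightarrow> bool" where
  "variety_locally_finite A \<longleftrightarrow>
     (\<forall>B :: 'a halg. in_variety A B \<and> finitely_generated B \<longrightarrow> finite (hcar B))"

datatype pt = PBot | Pa nat | Pb nat | Pc nat nat | Pd nat nat | Pea nat nat | Peb nat nat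

definition NN :: "nat \<Rightarrow> nat" where "NN n = 2 ^ (n + 1) - 1"

definition Tn :: "nat \<Rightarrow> (nat \<times> nat \<times> nat) set" where
  "Tn n = {(k1, k2, k3). k1 \<le> NN n \<and> k2 \<le> NN n \<and> k3 \<le> NN n \<and> k1 \<noteq> k2 \<and> k1 \<noteq> k3 \<and> k2 \<noteq> k3}"

text \<open>The fixed enumeration s_0,...,s_t of T_n is a list s (t + 1 = length s).\<close>
definition sel :: "(nat \<times> nat \<times> nat) list \<Rightarrow> nat \<Rightarrow> nat \<times> nat \<times> nat" where
  "sel s m = s ! (m mod length s)"

definition Unn :: "nat \<Rightarrow> pt set" where
  "Unn n = range Pa \<union> range Pb \<union> {Pc m k | m k. k \<le> NN n} \<union> {Pd m k | m k. k \<le> NN n}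
          \<union> {Pea m k | m k. k \<le> NN n} \<union> {Peb m k | m k. k \<le> NN n}"

definition Xn :: "nat \<Rightarrow> pt set" where
  "Xn n = insert PBot (Unn n)"

definition prec :: "nat \<Rightarrow> (nat \<times> nat \<times> nat) list \<Rightarrow> pt \<Rightarrow> pt \<Rightarrow> bool" where
  "prec n s x y = (case x of
      Pa m \<Rightarrow> (case sel s m of (k1, k2, k3) \<Rightarrow> y = Pc m k1 \<or> y = Pc m k2)
    | Pb m \<Rightarrow> (case sel s m of (k1, k2, k3) \<Rightarrow> y = Pc m k1 \<or> y = Pc m k3)
    | Pc m k \<Rightarrow> k \<le> NN n \<and> 1 \<le> m \<and>
          ((\<exists>j \<le> NN n. j \<noteq> k \<and> y = Pea (m - 1) j) \<or> (\<exists>i \<le> NN n. y = Peb (m - 1) i))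
    | Pd m k \<Rightarrow> k \<le> NN n \<and> (\<exists>j \<le> NN n. j \<noteq> k \<and> y = Pc m j)
    | Pea m k \<Rightarrow> k \<le> NN n \<and> (y = Pa m \<or> (\<exists>j \<le> NN n. j \<noteq> k \<and> y = Pd m j))
    | Peb m k \<Rightarrow> k \<le> NN n \<and> (y = Pb m \<or> (\<exists>j \<le> NN n. j \<noteq> k \<and> y = Pd m j))
    | PBot \<Rightarrow> False)"

definition leX :: "nat \<Rightarrow> (nat \<times> nat \<times> nat) list \<Rightarrow> pt \<Rightarrow> pt \<Rightarrow> bool" where
  "leX n s x y \<longleftrightarrow> x \<in> Xn n \<and> y \<in> Xn n \<and> (x = PBot \<or> (prec n s)\<^sup>*\<^sup>* x y)"

definition openX :: "nat \<Rightarrow> pt set \<Rightarrow> bool" where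
  "openX n U \<longleftrightarrow> U \<subseteq> Xn n \<and> (PBot \<notin> U \<or> finite (Xn n - U))"

definition clopenX :: "nat \<Rightarrow> pt set \<Rightarrow> bool" where
  "clopenX n U \<longleftrightarrow> openX n U \<and> openX n (Xn n - U)"

definition upsetX :: "nat \<Rightarrow> (nat \<times> nat \<times> nat) list \<Rightarrow> pt set \<Rightarrow> bool" where
  "upsetX n s U \<longleftrightarrow> U \<subseteq> Xn n \<and> (\<forall>x\<in>U. \<forall>y. leX n s x y \<longrightarrow> y \<in> U)"

definition downX :: "nat \<Rightarrow> (nat \<times> nat \<times> nat) list \<Rightarrow> pt set \<Rightarrow> pt set" where
  "downX n s S = {x. \<exists>y\<in>S. leX n s x y}"

definition Xstar :: "nat \<Rightarrow> (nat \<times> nat \<times> nat) list \<Rightarrow> pt set halg" where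
  "Xstar n s = \<lparr> hcar = {U. clopenX n U \<and> upsetX n s U},
                 hmeet = (\<inter>), hjoin = (\<union>),
                 himp = (\<lambda>U V. Xn n - downX n s (U - V)),
                 hbot = {}, htop = Xn n \<rparr>"

end

theory Submission imports Defs begin

fun lev :: "pt \<Rightarrow> nat" where
  "lev PBot = 0" | "lev (Pa m) = m" | "lev (Pb m) = m" | "lev (Pc m k) = m"
| "lev (Pd m k) = m" | "lev (Pea m k) = m" | "lev (Peb m k) = m"

fun rk :: "pt \<Rightarrow> nat" where
  "rk PBot = 0" | "rk (Pa m) = 4*m+1" | "rk (Pb m) = 4*m+1" | "rk (Pc m k) = 4*m"
| "rk (Pd m k) = 4*m+2" | "rk (Pea m k) = 4*m+3" | "rk (Peb m k) = 4*m+3"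

lemma rk_lev: "4 * lev z \<le> rk z" "rk z \<le> 4 * lev z + 3"
  by (cases z; simp)+

locale abom =
  fixes n :: nat and s :: "(nat \<times> nat \<times> nat) list"
  assumes n2: "n \<ge> 2" and sT: "set s = Tn n"
begin

abbreviation "N \<equiv> NN n"

lemma N_ge: "7 \<le> N"
proof -
  have "(2::nat)^3 \<le> 2^(n+1)" using n2 by (intro power_increasing) auto
  thus ?thesis by (simp add: NN_def)
qed

lemma s_ne: "s \<noteq> []"
proof -
  have "(0,1,2) \<in> Tn n" using N_ge by (simp add: Tn_def)
  thus ?thesis using sT by auto
qed

lemma sel_T: "sel s m \<in> Tn n"
  using s_ne sT unfolding sel_def by (metis length_greater_0_conv mod_less_divisor nth_mem)

lemma sel_props: assumes "sel s m = (k1,k2,k3)"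
  shows "k1 \<le> N \<and> k2 \<le> N \<and> k3 \<le> N \<and> k1\<noteq>k2 \<and> k1\<noteq>k3 \<and> k2\<noteq>k3"
  using sel_T[of m] assms by (simp add: Tn_def)

fun inU :: "pt \<Rightarrow> bool" where
  "inU PBot = False" | "inU (Pa m) = True" | "inU (Pb m) = True" | "inU (Pc m k) = (k \<le> N)"
| "inU (Pd m k) = (k \<le> N)" | "inU (Pea m k) = (k \<le> N)" | "inU (Peb m k) = (k \<le> N)"

lemma Unn_eq: "Unn n = {z. inU z}"
  unfolding Unn_def by (auto elim: inU.elims)

lemma Xn_eq: "Xn n = insert PBot {z. inU z}"
  unfolding Xn_def Unn_eq ..

definition SL :: "pt \<Rightarrow> pt \<Rightarrow> bool" where
"SL x y = (case x of
   PBot \<Rightarrow> False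
 | Pa m \<Rightarrow> (case sel s m of (k1,k2,k3) \<Rightarrow> y = Pa m \<or> y = Pc m k1 \<or> y = Pc m k2)
 | Pb m \<Rightarrow> (case sel s m of (k1,k2,k3) \<Rightarrow> y = Pb m \<or> y = Pc m k1 \<or> y = Pc m k3)
 | Pc m k \<Rightarrow> y = Pc m k
 | Pd m k \<Rightarrow> y = Pd m k \<or> (\<exists>j. j \<noteq> k \<and> y = Pc m j)
 | Pea m k \<Rightarrow> y = Pea m k \<or> y = Pa m \<or> (\<exists>j. j\<noteq>k \<and> y = Pd m j) \<or> (\<exists>j. y = Pc m j)
 | Peb m k \<Rightarrow> y = Peb m k \<or> y = Pb m \<or> (\<exists>j. j\<noteq>k \<and> y = Pd m j) \<or> (\<exists>j. y = Pc m j))"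

definition LE :: "pt \<Rightarrow> pt \<Rightarrow> bool" where
"LE x y \<longleftrightarrow> inU x \<and> inU y \<and> (lev y + 2 \<le> lev x \<or>
   (lev y + 1 = lev x \<and> \<not>(\<exists>k. x = Pc (lev x) k \<and> y = Pea (lev y) k)) \<or> (lev y = lev x \<and> SL x y))"

abbreviation "P \<equiv> prec n s"

lemma prec_inU: "P x y \<Longrightarrow> inU x \<and> inU y"
  unfolding prec_def
  by (auto split: pt.splits prod.splits dest: sel_props)

lemma LE_refl: "inU x \<Longrightarrow> LE x x"
  unfolding LE_def SL_def by (cases x) (auto split: prod.splits)

lemma LE_step: "P x y \<Longrightarrow> LE y z \<Longrightarrow> LE x z"
  unfolding prec_def
  apply (cases x)
  apply (auto split: prod.splits dest: sel_props)
  apply (auto simp: LE_def SL_def split: prod.splits dest: sel_props)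
  done

lemma rt_LE: "P\<^sup>*\<^sup>* x y \<Longrightarrow> inU x \<Longrightarrow> LE x y"
proof (induction rule: converse_rtranclp_induct)
  case base thus ?case by (rule LE_refl)
next
  case (step x y) thus ?case using LE_step prec_inU by blast
qed

lemma pick: "\<exists>j. j \<le> N \<and> j \<noteq> a \<and> j \<noteq> b"
proof -
  have "N \<ge> 2" using N_ge by simp
  thus ?thesis by (metis One_nat_def Suc_1 Suc_n_not_le_n le_trans nat_le_linear not_less_eq_eq numeral_2_eq_2 zero_le)
qed

lemma edge: "P x y \<Longrightarrow> P\<^sup>*\<^sup>* x y" by auto

lemma SL_pos: assumes "inU x" "inU y" "SL x y" shows "P\<^sup>*\<^sup>* x y"
proof (cases x)
  case PBot thus ?thesis using assms by simp
next
  case (Pa m)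
  obtain k1 k2 k3 where e: "sel s m = (k1,k2,k3)" by (metis prod.exhaust)
  show ?thesis using assms e Pa by (auto simp: SL_def prec_def intro: edge)
next
  case (Pb m)
  obtain k1 k2 k3 where e: "sel s m = (k1,k2,k3)" by (metis prod.exhaust)
  show ?thesis using assms e Pb by (auto simp: SL_def prec_def intro: edge)
next
  case (Pc m k) thus ?thesis using assms by (auto simp: SL_def)
next
  case (Pd m k) thus ?thesis using assms by (auto simp: SL_def prec_def intro: edge)
next
  case (Pea m k)
  { fix j assume j: "j \<le> N" "y = Pc m j"
    obtain i where i: "i \<le> N" "i \<noteq> k" "i \<noteq> j" using pick by blast
    have "P x (Pd m i)" using Pea i assms by (auto simp: prec_def)
    moreover have "P (Pd m i) y" using i j by (auto simp: prec_def)
    ultimately have ?thesis by auto }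
  thus ?thesis using assms Pea by (auto simp: SL_def prec_def intro: edge)
next
  case (Peb m k)
  { fix j assume j: "j \<le> N" "y = Pc m j"
    obtain i where i: "i \<le> N" "i \<noteq> k" "i \<noteq> j" using pick by blast
    have "P x (Pd m i)" using Peb i assms by (auto simp: prec_def)
    moreover have "P (Pd m i) y" using i j by (auto simp: prec_def)
    ultimately have ?thesis by auto }
  thus ?thesis using assms Peb by (auto simp: SL_def prec_def intro: edge)
qed

lemma c_up: assumes "k \<le> N" "inU y" "lev y = m" "y \<noteq> Pea m k"
  shows "P\<^sup>*\<^sup>* (Pc (Suc m) k) y"
proof (cases y)
  case PBot thus ?thesis using assms by simp
next
  case (Pa m')
  obtain j where j: "j \<le> N" "j \<noteq> k" "j \<noteq> k" using pick by blast
  have "P (Pc (Suc m) k) (Pea m j)" using j assms by (auto simp: prec_def)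
  moreover have "P (Pea m j) y" using j assms Pa by (auto simp: prec_def)
  ultimately show ?thesis by auto
next
  case (Pb m')
  have "P (Pc (Suc m) k) (Peb m 0)" using assms by (auto simp: prec_def)
  moreover have "P (Peb m 0) y" using assms Pb by (auto simp: prec_def)
  ultimately show ?thesis by auto
next
  case (Pd m' j)
  obtain i where i: "i \<le> N" "i \<noteq> j" "i \<noteq> j" using pick by blast
  have "P (Pc (Suc m) k) (Peb m i)" using i assms by (auto simp: prec_def)
  moreover have "P (Peb m i) y" using i assms Pd by (auto simp: prec_def)
  ultimately show ?thesis by auto
next
  case (Pc m' j)
  obtain i where i: "i \<le> N" "i \<noteq> j" "i \<noteq> j" using pick by blast
  obtain i' where i': "i' \<le> N" "i' \<noteq> j" "i' \<noteq> i" using pick by blast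
  have "P (Pc (Suc m) k) (Peb m i)" using i assms by (auto simp: prec_def)
  moreover have "P (Peb m i) (Pd m i')" using i i' assms by (auto simp: prec_def)
  moreover have "P (Pd m i') y" using i' assms Pc by (auto simp: prec_def)
  ultimately show ?thesis by (meson converse_rtranclp_into_rtranclp r_into_rtranclp)
next
  case (Pea m' j) thus ?thesis using assms by (auto simp: prec_def intro: edge)
next
  case (Peb m' j) thus ?thesis using assms by (auto simp: prec_def intro: edge)
qed

lemma pick3: "\<exists>j. j \<le> N \<and> j \<noteq> a \<and> j \<noteq> b \<and> j \<noteq> c"
proof -
  have "N \<ge> 3" using N_ge by simp
  moreover have "\<exists>j::nat. j \<le> 3 \<and> j \<noteq> a \<and> j \<noteq> b \<and> j \<noteq> c" by presburger
  ultimately show ?thesis by (meson le_trans)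
qed

lemma gap1: assumes "inU x" "inU y" "lev x = Suc (lev y)" "\<not>(\<exists>k. x = Pc (lev x) k \<and> y = Pea (lev y) k)"
  shows "P\<^sup>*\<^sup>* x y"
proof -
  define m where "m = lev y"
  have cu: "P\<^sup>*\<^sup>* (Pc (Suc m) j) y" if "j \<le> N" "y \<noteq> Pea m j" for j
    using c_up that assms m_def by auto
  have ca: "P\<^sup>*\<^sup>* (Pa (Suc m)) y"
  proof -
    obtain k1 k2 k3 where e: "sel s (Suc m) = (k1,k2,k3)" by (metis prod.exhaust)
    have "\<exists>j. (j = k1 \<or> j = k2) \<and> y \<noteq> Pea m j" using sel_props[OF e] by auto
    then obtain j where j: "j = k1 \<or> j = k2" "y \<noteq> Pea m j" by blast
    have "P (Pa (Suc m)) (Pc (Suc m) j)" using j e by (auto simp: prec_def)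
    moreover have "j \<le> N" using j sel_props[OF e] by auto
    ultimately show ?thesis using cu j by (meson converse_rtranclp_into_rtranclp)
  qed
  have cb: "P\<^sup>*\<^sup>* (Pb (Suc m)) y"
  proof -
    obtain k1 k2 k3 where e: "sel s (Suc m) = (k1,k2,k3)" by (metis prod.exhaust)
    have "\<exists>j. (j = k1 \<or> j = k3) \<and> y \<noteq> Pea m j" using sel_props[OF e] by auto
    then obtain j where j: "j = k1 \<or> j = k3" "y \<noteq> Pea m j" by blast
    have "P (Pb (Suc m)) (Pc (Suc m) j)" using j e by (auto simp: prec_def)
    moreover have "j \<le> N" using j sel_props[OF e] by auto
    ultimately show ?thesis using cu j by (meson converse_rtranclp_into_rtranclp)
  qed
  show ?thesis
  proof (cases x)
    case PBot thus ?thesis using assms by simp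
  next
    case (Pa m') thus ?thesis using ca assms m_def by simp
  next
    case (Pb m') thus ?thesis using cb assms m_def by simp
  next
    case (Pc m' k) thus ?thesis using cu assms m_def by auto
  next
    case (Pd m' k)
    obtain j where j: "j \<le> N" "j \<noteq> k" "y \<noteq> Pea m j"
    proof (cases "\<exists>i. y = Pea m i")
      case True then obtain i where "y = Pea m i" by blast
      thus ?thesis using pick[of k i] that by auto
    next
      case False thus ?thesis using pick[of k k] that by auto
    qed
    have "P x (Pc (Suc m) j)" using Pd j assms m_def by (auto simp: prec_def)
    thus ?thesis using cu j by (meson converse_rtranclp_into_rtranclp)
  next
    case (Pea m' k)
    have "P x (Pa (Suc m))" using Pea assms m_def by (auto simp: prec_def)
    thus ?thesis using ca by (meson converse_rtranclp_into_rtranclp)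
  next
    case (Peb m' k)
    have "P x (Pb (Suc m))" using Peb assms m_def by (auto simp: prec_def)
    thus ?thesis using cb by (meson converse_rtranclp_into_rtranclp)
  qed
qed

lemma gap2_aux: "inU y \<Longrightarrow> \<forall>x. inU x \<longrightarrow> lev x = lev y + 2 + d \<longrightarrow> P\<^sup>*\<^sup>* x y"
proof (induction d)
  case 0
  show ?case
  proof (intro allI impI)
    fix x assume x: "inU x" "lev x = lev y + 2 + 0"
    obtain j where j: "j \<le> N" "y \<noteq> Pea (lev y) j"
    proof (cases "\<exists>i. y = Pea (lev y) i")
      case True then obtain i where i: "y = Pea (lev y) i" by blast
      obtain j where "j \<le> N" "j \<noteq> i" using pick[of i i] by blast
      moreover have "y \<noteq> Pea (lev y) j" using i \<open>j \<noteq> i\<close> by (metis pt.inject(5))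
      ultimately show ?thesis using that by blast
    next
      case False thus ?thesis using pick[of 0 0] that by auto
    qed
    have "P\<^sup>*\<^sup>* x (Pc (Suc (lev y)) j)" using x j by (intro gap1) auto
    moreover have "P\<^sup>*\<^sup>* (Pc (Suc (lev y)) j) y" using j 0 by (intro c_up) auto
    ultimately show "P\<^sup>*\<^sup>* x y" by auto
  qed
next
  case (Suc d)
  show ?case
  proof (intro allI impI)
    fix x assume x: "inU x" "lev x = lev y + 2 + Suc d"
    have "P\<^sup>*\<^sup>* x (Pc (lev y + 2 + d) 0)" using x by (intro gap1) auto
    moreover have "P\<^sup>*\<^sup>* (Pc (lev y + 2 + d) 0) y" using Suc by auto
    ultimately show "P\<^sup>*\<^sup>* x y" by auto
  qed
qed

lemma gap2: "inU x \<Longrightarrow> inU y \<Longrightarrow> lev y + 2 \<le> lev x \<Longrightarrow> P\<^sup>*\<^sup>* x y"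
  using gap2_aux[of y "lev x - lev y - 2"] by auto

lemma LE_pos: "LE x y \<Longrightarrow> P\<^sup>*\<^sup>* x y"
  unfolding LE_def using gap2 gap1 SL_pos by auto

lemma LE_iff: "LE x y \<longleftrightarrow> inU x \<and> P\<^sup>*\<^sup>* x y"
  using LE_pos rt_LE LE_def by blast

lemma LE_trans: "LE x y \<Longrightarrow> LE y z \<Longrightarrow> LE x z"
  unfolding LE_iff by auto

lemma leX_iff: "leX n s x y \<longleftrightarrow> (x = PBot \<and> y \<in> Xn n) \<or> LE x y"
  unfolding leX_def Xn_eq using LE_iff LE_def by auto

lemma LE_rk: "LE x y \<Longrightarrow> x \<noteq> y \<Longrightarrow> rk y < rk x"
proof -
  assume a: "LE x y" "x \<noteq> y"
  show ?thesis
  proof (cases "lev y < lev x")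
    case True
    have "rk y \<le> 4 * lev y + 3" "4 * lev x \<le> rk x" using rk_lev by auto
    thus ?thesis using True by linarith
  next
    case False
    hence "SL x y" using a unfolding LE_def by auto
    thus ?thesis using a by (cases x) (auto simp: SL_def split: prod.splits)
  qed
qed

lemma LE_rk': "LE x y \<Longrightarrow> rk y \<le> rk x"
  using LE_rk by fastforce

lemma LE_antisym: "LE x y \<Longrightarrow> LE y x \<Longrightarrow> x = y"
proof (rule ccontr)
  assume "LE x y" "LE y x" "x \<noteq> y"
  hence "rk y < rk x" "rk x < rk y" using LE_rk by auto
  thus False by simp
qed


abbreviation "A \<equiv> Xstar n s"

lemma A_simps: "hcar A = {U. clopenX n U \<and> upsetX n s U}" "hmeet A = (\<inter>)" "hjoin A = (\<union>)"
  "himp A = (\<lambda>U V. Xn n - downX n s (U - V))" "hbot A = {}" "htop A = Xn n"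
  by (simp_all add: Xstar_def)

lemma leX_Xn: "leX n s x y \<Longrightarrow> x \<in> Xn n \<and> y \<in> Xn n"
  by (simp add: leX_def)

lemma leX_refl: "x \<in> Xn n \<Longrightarrow> leX n s x x"
  by (simp add: leX_def)

lemma leX_trans: "leX n s x y \<Longrightarrow> leX n s y z \<Longrightarrow> leX n s x z"
  unfolding leX_iff using LE_trans LE_def Xn_eq by auto

lemma leX_bot: "y \<in> Xn n \<Longrightarrow> leX n s PBot y"
  by (simp add: leX_iff)

lemma hcar_iff: "U \<in> hcar A \<longleftrightarrow> upsetX n s U \<and> (U = Xn n \<or> (finite U \<and> PBot \<notin> U))"
proof
  assume "U \<in> hcar A"
  hence c: "clopenX n U" and u: "upsetX n s U" by (auto simp: A_simps)
  have sub: "U \<subseteq> Xn n" using u by (simp add: upsetX_def)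
  show "upsetX n s U \<and> (U = Xn n \<or> (finite U \<and> PBot \<notin> U))"
  proof (cases "PBot \<in> U")
    case True
    hence "Xn n \<subseteq> U" using u leX_bot by (auto simp: upsetX_def)
    thus ?thesis using sub u by auto
  next
    case False
    hence "PBot \<in> Xn n - U" by (simp add: Xn_def)
    hence "finite (Xn n - (Xn n - U))" using c by (auto simp: clopenX_def openX_def)
    moreover have "Xn n - (Xn n - U) = U" using sub by auto
    ultimately show ?thesis using False u by auto
  qed
next
  assume a: "upsetX n s U \<and> (U = Xn n \<or> (finite U \<and> PBot \<notin> U))"
  hence sub: "U \<subseteq> Xn n" by (simp add: upsetX_def)
  have "clopenX n U"
  proof (cases "U = Xn n")
    case True thus ?thesis by (simp add: clopenX_def openX_def)
  next
    case False
    hence "finite U" "PBot \<notin> U" using a by auto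
    moreover have "Xn n - (Xn n - U) = U" using sub by auto
    ultimately show ?thesis using sub by (auto simp: clopenX_def openX_def)
  qed
  thus "U \<in> hcar A" using a by (simp add: A_simps)
qed

lemma inU_infinite: "infinite {z. inU z}"
proof -
  have "range Pa \<subseteq> {z. inU z}" by auto
  moreover have "infinite (range Pa)"
  proof
    assume "finite (range Pa)"
    hence "finite (UNIV :: nat set)" by (rule finite_imageD) (simp add: inj_def)
    thus False by simp
  qed
  ultimately show ?thesis using infinite_super by blast
qed

lemma finite_rk: "finite {z. inU z \<and> rk z < r}"
proof -
  let ?S = "Pa ` {..<r} \<union> Pb ` {..<r} \<union> (\<lambda>(m,k). Pc m k) ` ({..<r} \<times> {..N})
     \<union> (\<lambda>(m,k). Pd m k) ` ({..<r} \<times> {..N}) \<union> (\<lambda>(m,k). Pea m k) ` ({..<r} \<times> {..N})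
     \<union> (\<lambda>(m,k). Peb m k) ` ({..<r} \<times> {..N})"
  have "{z. inU z \<and> rk z < r} \<subseteq> ?S"
  proof
    fix z assume "z \<in> {z. inU z \<and> rk z < r}"
    thus "z \<in> ?S" by (cases z) force+
  qed
  moreover have "finite ?S" by auto
  ultimately show ?thesis using finite_subset by blast
qed

definition up :: "pt \<Rightarrow> pt set" where "up x = {z. leX n s x z}"

lemma up_eq: "inU x \<Longrightarrow> up x = {z. LE x z}"
  by (auto simp: up_def leX_iff)

lemma up_finite: "inU x \<Longrightarrow> finite (up x)"
proof -
  assume x: "inU x"
  have "up x \<subseteq> {z. inU z \<and> rk z < Suc (rk x)}" using x LE_rk' by (auto simp: up_eq LE_def less_Suc_eq_le)
  thus ?thesis using finite_rk finite_subset by blast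
qed

lemma up_hcar: "inU x \<Longrightarrow> up x \<in> hcar A"
proof -
  assume x: "inU x"
  have "upsetX n s (up x)" unfolding upsetX_def up_def using leX_Xn leX_trans by blast
  moreover have "PBot \<notin> up x" using x by (simp add: up_eq LE_def)
  ultimately show ?thesis using up_finite[OF x] by (simp add: hcar_iff)
qed

lemma hcar_sub: "U \<in> hcar A \<Longrightarrow> U \<subseteq> Xn n"
  by (simp add: hcar_iff upsetX_def)

lemma hcar_Int: "U \<in> hcar A \<Longrightarrow> V \<in> hcar A \<Longrightarrow> U \<inter> V \<in> hcar A"
  unfolding hcar_iff upsetX_def by auto

lemma hcar_Un: "U \<in> hcar A \<Longrightarrow> V \<in> hcar A \<Longrightarrow> U \<union> V \<in> hcar A"
  unfolding hcar_iff upsetX_def by auto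

lemma down_cofinite: assumes "inU w" shows "finite (Xn n - downX n s {w})"
proof -
  have "Xn n - downX n s {w} \<subseteq> {z. inU z \<and> rk z < 4 * (lev w + 2)}"
  proof
    fix z assume z: "z \<in> Xn n - downX n s {w}"
    hence "\<not> leX n s z w" by (auto simp: downX_def)
    hence "z \<noteq> PBot" using assms leX_bot Xn_eq by auto
    hence iz: "inU z" using z Xn_eq by auto
    have "\<not> lev w + 2 \<le> lev z" using \<open>\<not> leX n s z w\<close> iz assms by (auto simp: leX_iff LE_def)
    thus "z \<in> {z. inU z \<and> rk z < 4 * (lev w + 2)}" using iz rk_lev(2)[of z] by auto
  qed
  thus ?thesis using finite_rk finite_subset by blast
qed

lemma hcar_imp: assumes "U \<in> hcar A" "V \<in> hcar A" shows "Xn n - downX n s (U - V) \<in> hcar A"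
proof -
  let ?R = "Xn n - downX n s (U - V)"
  have up: "upsetX n s ?R"
    unfolding upsetX_def downX_def using leX_Xn leX_trans by blast
  show ?thesis
  proof (cases "U - V = {}")
    case True
    hence "?R = Xn n" by (auto simp: downX_def)
    thus ?thesis by (simp add: hcar_iff upsetX_def leX_Xn)
  next
    case False
    have "\<exists>w \<in> U - V. inU w"
    proof (rule ccontr)
      assume "\<not> ?thesis"
      hence "U - V \<subseteq> {PBot}" using assms(1) hcar_sub Xn_eq by blast
      hence "U - V = {PBot}" using False by auto
      hence "PBot \<in> U" "PBot \<notin> V" by auto
      hence "U = Xn n" using assms(1) unfolding hcar_iff by auto
      have "V = {z. inU z}"
      proof
        show "V \<subseteq> {z. inU z}"
        proof
          fix z assume "z \<in> V"
          hence "z \<in> Xn n" "z \<noteq> PBot" using hcar_sub[OF assms(2)] \<open>PBot \<notin> V\<close> by auto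
          thus "z \<in> {z. inU z}" by (simp add: Xn_eq)
        qed
      next
        show "{z. inU z} \<subseteq> V"
        proof
          fix z assume "z \<in> {z. inU z}"
          hence "z \<in> U" "z \<noteq> PBot" using \<open>U = Xn n\<close> by (auto simp: Xn_eq)
          thus "z \<in> V" using \<open>U - V = {PBot}\<close> by blast
        qed
      qed
      moreover have "V \<noteq> Xn n" using \<open>PBot \<notin> V\<close> by (auto simp: Xn_eq)
      ultimately have "finite {z. inU z}" using assms(2) unfolding hcar_iff by auto
      thus False using inU_infinite by simp
    qed
    then obtain w where w: "w \<in> U - V" "inU w" by blast
    have "?R \<subseteq> Xn n - downX n s {w}" using w unfolding downX_def by blast
    hence "finite ?R" using down_cofinite[OF w(2)] finite_subset by blast
    moreover have "PBot \<notin> ?R"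
    proof -
      have "leX n s PBot w" using w leX_bot Xn_eq by auto
      thus ?thesis using w(1) unfolding downX_def by blast
    qed
    ultimately show ?thesis using up unfolding hcar_iff by blast
  qed
qed

lemma is_alg_A: "is_alg A"
proof -
  have e: "{} \<in> hcar A" by (simp add: hcar_iff upsetX_def)
  have t: "Xn n \<in> hcar A" by (simp add: hcar_iff upsetX_def leX_Xn)
  show ?thesis unfolding is_alg_def
    using e t hcar_Int hcar_Un hcar_imp by (simp add: A_simps(2-6)) blast
qed

lemma gen_sub: "G \<subseteq> hcar A \<Longrightarrow> generated A G \<subseteq> hcar A"
proof
  fix x assume G: "G \<subseteq> hcar A" and x: "x \<in> generated A G"
  from x show "x \<in> hcar A"
    by (induction rule: generated.induct) (use G is_alg_A in \<open>auto simp: is_alg_def\<close>)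
qed


lemma bits_eq: "j < 2^(Suc q) \<Longrightarrow> k < 2^(Suc q) \<Longrightarrow> (\<forall>i\<le>q. odd (j div 2^i) = odd (k div 2^i)) \<Longrightarrow> (j::nat) = k"
proof (induction q arbitrary: j k)
  case 0
  hence "j \<in> {0,1}" "k \<in> {0,1}" by auto
  thus ?case using 0 by auto
next
  case (Suc q)
  have "j div 2 < 2^(Suc q)" "k div 2 < 2^(Suc q)" using Suc.prems by auto
  moreover have "\<forall>i\<le>q. odd (j div 2 div 2^i) = odd (k div 2 div 2^i)"
  proof (intro allI impI)
    fix i assume "i \<le> q"
    hence "odd (j div 2^(Suc i)) = odd (k div 2^(Suc i))" using Suc.prems(3) by auto
    thus "odd (j div 2 div 2^i) = odd (k div 2 div 2^i)" by (simp add: div_mult2_eq)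
  qed
  ultimately have "j div 2 = k div 2" using Suc.IH by blast
  moreover have "odd j = odd k" using Suc.prems(3) by force
  ultimately show ?case by (metis div_mult_mod_eq odd_iff_mod_2_eq_one parity_cases)
qed

lemma pow_div_odd: "odd ((2::nat)^i div 2^i') \<Longrightarrow> i = i'"
proof (cases "i' \<le> i")
  case True
  hence "(2::nat)^i div 2^i' = 2^(i - i')" by (simp add: power_diff)
  moreover assume "odd ((2::nat)^i div 2^i')"
  ultimately show ?thesis using True by (cases "i - i'") auto
next
  case False
  hence "(2::nat)^i < 2^i'" by simp
  moreover assume "odd ((2::nat)^i div 2^i')"
  ultimately show ?thesis by simp
qed

definition Gi :: "nat \<Rightarrow> pt set" where "Gi i = {Pc 0 k | k. k \<le> N \<and> odd (k div 2^i)}"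
definition GG :: "pt set set" where "GG = Gi ` {..n}"
abbreviation "Gen \<equiv> generated A GG"

lemma maxc: "leX n s (Pc 0 k) y \<Longrightarrow> y = Pc 0 k"
  by (auto simp: leX_iff LE_def SL_def)

lemma Gi_hcar: "Gi i \<in> hcar A"
proof -
  have "Gi i \<subseteq> (\<lambda>k. Pc 0 k) ` {..N}" by (auto simp: Gi_def)
  hence "finite (Gi i)" using finite_subset by blast
  moreover have "upsetX n s (Gi i)"
    unfolding upsetX_def using maxc by (auto simp: Gi_def Xn_eq)
  moreover have "PBot \<notin> Gi i" by (auto simp: Gi_def)
  ultimately show ?thesis by (simp add: hcar_iff)
qed

lemma GG_hcar: "GG \<subseteq> hcar A" using Gi_hcar by (auto simp: GG_def)

lemma Gen_hcar: "Gen \<subseteq> hcar A" using gen_sub[OF GG_hcar] .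

lemma gen_Un: "a \<in> Gen \<Longrightarrow> b \<in> Gen \<Longrightarrow> a \<union> b \<in> Gen"
  using gen_join[of a A GG b] by (simp add: A_simps)
lemma gen_Int: "a \<in> Gen \<Longrightarrow> b \<in> Gen \<Longrightarrow> a \<inter> b \<in> Gen"
  using gen_meet[of a A GG b] by (simp add: A_simps)
lemma gen_imp': "a \<in> Gen \<Longrightarrow> b \<in> Gen \<Longrightarrow> Xn n - downX n s (a - b) \<in> Gen"
  using gen_imp[of a A GG b] by (simp add: A_simps)
lemma gen_empty: "{} \<in> Gen"
  using gen_bot[of A GG] by (simp add: A_simps)
lemma gen_Xn: "Xn n \<in> Gen"
  using gen_top[of A GG] by (simp add: A_simps)

lemma gen_UN: "finite S \<Longrightarrow> (\<forall>y\<in>S. f y \<in> Gen) \<Longrightarrow> \<Union>(f ` S) \<in> Gen"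
  by (induction S rule: finite_induct) (auto intro: gen_Un gen_empty)

lemma gen_INT: "finite S \<Longrightarrow> (\<forall>y\<in>S. f y \<in> Gen) \<Longrightarrow> Xn n \<inter> \<Inter>(f ` S) \<in> Gen"
proof (induction S rule: finite_induct)
  case empty thus ?case using gen_Xn by simp
next
  case (insert x F)
  have "Xn n \<inter> \<Inter>(f ` insert x F) = f x \<inter> (Xn n \<inter> \<Inter>(f ` F))" by auto
  thus ?case using insert gen_Int by auto
qed

lemma gen_upset: assumes "finite S" "\<forall>y\<in>S. inU y \<and> up y \<in> Gen" "\<forall>y\<in>S. \<forall>z. LE y z \<longrightarrow> z \<in> S"
  shows "S \<in> Gen"
proof -
  have "S = \<Union>(up ` S)"
  proof
    show "S \<subseteq> \<Union>(up ` S)" using assms(2) LE_refl up_eq by blast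
    show "\<Union>(up ` S) \<subseteq> S" using assms(2,3) up_eq by auto
  qed
  moreover have "\<Union>(up ` S) \<in> Gen" using assms by (intro gen_UN) auto
  ultimately show ?thesis by simp
qed

lemma gen_NEG: assumes w: "inU w" and h: "\<forall>y. LE w y \<longrightarrow> up y \<in> Gen"
  shows "Xn n - downX n s {w} \<in> Gen"
proof -
  let ?V = "up w - {w}"
  have "?V \<in> Gen"
  proof (rule gen_upset)
    show "finite ?V" using up_finite[OF w] by simp
    show "\<forall>y\<in>?V. inU y \<and> up y \<in> Gen" using h w by (auto simp: up_eq LE_def)
    show "\<forall>y\<in>?V. \<forall>z. LE y z \<longrightarrow> z \<in> ?V"
    proof (intro ballI allI impI)
      fix y z assume y: "y \<in> ?V" and yz: "LE y z"
      have wy: "LE w y" "y \<noteq> w" using y w by (auto simp: up_eq)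
      hence "LE w z" using yz LE_trans by blast
      moreover have "z \<noteq> w" using wy yz LE_antisym by blast
      ultimately show "z \<in> ?V" using w by (simp add: up_eq)
    qed
  qed
  moreover have "up w \<in> Gen" using h w LE_refl by blast
  ultimately have "Xn n - downX n s (up w - ?V) \<in> Gen" using gen_imp' by blast
  moreover have "up w - ?V = {w}" using w LE_refl up_eq by auto
  ultimately show ?thesis by simp
qed

lemma key: assumes "T \<in> Gen" "x \<in> T" "\<forall>z\<in>T. z \<in> R \<or> z = x" "x \<notin> R" "R \<in> Gen"
  "inU x" "up x - {x} \<subseteq> R" "up x - {x} \<in> Gen"
  shows "up x \<in> Gen"
proof -
  let ?V = "up x - {x}"
  have uT: "upsetX n s T" using assms(1) Gen_hcar by (auto simp: hcar_iff)
  have "up x = T \<inter> (Xn n - downX n s (R - ?V))"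
  proof
    show "up x \<subseteq> T \<inter> (Xn n - downX n s (R - ?V))"
    proof
      fix z assume z: "z \<in> up x"
      hence xz: "leX n s x z" by (simp add: up_def)
      have "z \<in> T" using uT xz assms(2) by (auto simp: upsetX_def)
      moreover have "z \<in> Xn n" using leX_Xn xz by blast
      moreover have "z \<notin> downX n s (R - ?V)"
      proof
        assume "z \<in> downX n s (R - ?V)"
        then obtain y where y: "y \<in> R" "y \<notin> ?V" "leX n s z y" by (auto simp: downX_def)
        hence "leX n s x y" using xz leX_trans by blast
        hence "y \<in> up x" by (simp add: up_def)
        hence "y = x" using y by auto
        thus False using y assms(4) by simp
      qed
      ultimately show "z \<in> T \<inter> (Xn n - downX n s (R - ?V))" by simp
    qed
  next
    show "T \<inter> (Xn n - downX n s (R - ?V)) \<subseteq> up x"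
    proof
      fix z assume z: "z \<in> T \<inter> (Xn n - downX n s (R - ?V))"
      show "z \<in> up x"
      proof (cases "z = x")
        case True thus ?thesis using assms(6) by (simp add: up_def leX_refl Xn_eq)
      next
        case False
        hence "z \<in> R" using z assms(3) by auto
        moreover have "leX n s z z" using z leX_refl by auto
        ultimately have "z \<in> ?V" using z by (auto simp: downX_def)
        thus ?thesis by simp
      qed
    qed
  qed
  moreover have "T \<inter> (Xn n - downX n s (R - ?V)) \<in> Gen"
    using assms by (intro gen_Int gen_imp') auto
  ultimately show ?thesis by simp
qed


lemma far: "inU z \<Longrightarrow> inU w \<Longrightarrow> lev w < lev z \<Longrightarrow> (\<forall>k. w \<noteq> Pea (lev w) k) \<Longrightarrow> LE z w"
  unfolding LE_def by auto

lemma Tcase: assumes x: "inU x" "\<forall>k. x \<noteq> Pc 0 k"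
  shows "\<exists>w1 w2. inU w1 \<and> inU w2 \<and> rk w1 < rk x \<and> rk w2 < rk x \<and> \<not> LE x w1 \<and> \<not> LE x w2 \<and>
     (\<forall>z. inU z \<longrightarrow> rk x \<le> rk z \<longrightarrow> z \<noteq> x \<longrightarrow> LE z w1 \<or> LE z w2)"
proof (cases x)
  case PBot thus ?thesis using x by simp
next
  case (Pc m k)
  then obtain m' where m: "m = Suc m'" using x by (cases m) auto
  have "\<forall>z. inU z \<longrightarrow> rk x \<le> rk z \<longrightarrow> z \<noteq> x \<longrightarrow> LE z (Pea m' k)"
  proof (intro allI impI)
    fix z assume z: "inU z" "rk x \<le> rk z" "z \<noteq> x"
    have "lev z \<ge> Suc m'" using z(2) rk_lev[of z] Pc m by auto
    thus "LE z (Pea m' k)" using z x Pc m by (cases z) (auto simp: LE_def)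
  qed
  moreover have "\<not> LE x (Pea m' k)" using Pc m by (simp add: LE_def SL_def)
  ultimately show ?thesis using Pc m x by (intro exI[of _ "Pea m' k"]) auto
next
  case (Pa m)
  obtain k1 k2 k3 where e: "sel s m = (k1,k2,k3)" by (metis prod.exhaust)
  note sp = sel_props[OF e]
  obtain k where k: "k \<le> N" "k \<noteq> k1" "k \<noteq> k2" "k \<noteq> k3" using pick3 by blast
  have "\<forall>z. inU z \<longrightarrow> rk x \<le> rk z \<longrightarrow> z \<noteq> x \<longrightarrow> LE z (Pc m k) \<or> LE z (Pc m k3)"
  proof (intro allI impI)
    fix z assume z: "inU z" "rk x \<le> rk z" "z \<noteq> x"
    have "lev z \<ge> m" using z(2) rk_lev[of z] Pa by auto
    moreover have "lev z = m \<Longrightarrow> LE z (Pc m k) \<or> LE z (Pc m k3)" using z x Pa k sp e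
      by (cases z) (auto simp: LE_def SL_def)
    ultimately show "LE z (Pc m k) \<or> LE z (Pc m k3)" using z x Pa k sp e far[of z "Pc m k"] by (cases "lev z = m") auto
  qed
  moreover have "\<not> LE x (Pc m k)" "\<not> LE x (Pc m k3)" using Pa e k sp by (auto simp: LE_def SL_def)
  ultimately show ?thesis using Pa k sp by (intro exI[of _ "Pc m k"] exI[of _ "Pc m k3"]) auto
next
  case (Pb m)
  obtain k1 k2 k3 where e: "sel s m = (k1,k2,k3)" by (metis prod.exhaust)
  note sp = sel_props[OF e]
  obtain k where k: "k \<le> N" "k \<noteq> k1" "k \<noteq> k2" "k \<noteq> k3" using pick3 by blast
  have "\<forall>z. inU z \<longrightarrow> rk x \<le> rk z \<longrightarrow> z \<noteq> x \<longrightarrow> LE z (Pc m k) \<or> LE z (Pc m k2)"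
  proof (intro allI impI)
    fix z assume z: "inU z" "rk x \<le> rk z" "z \<noteq> x"
    have "lev z \<ge> m" using z(2) rk_lev[of z] Pb by auto
    moreover have "lev z = m \<Longrightarrow> LE z (Pc m k) \<or> LE z (Pc m k2)" using z x Pb k sp e
      by (cases z) (auto simp: LE_def SL_def)
    ultimately show "LE z (Pc m k) \<or> LE z (Pc m k2)" using z x Pb k sp e far[of z "Pc m k"] by (cases "lev z = m") auto
  qed
  moreover have "\<not> LE x (Pc m k)" "\<not> LE x (Pc m k2)" using Pb e k sp by (auto simp: LE_def SL_def)
  ultimately show ?thesis using Pb k sp by (intro exI[of _ "Pc m k"] exI[of _ "Pc m k2"]) auto
next
  case (Pd m k)
  have "\<forall>z. inU z \<longrightarrow> rk x \<le> rk z \<longrightarrow> z \<noteq> x \<longrightarrow> LE z (Pc m k)"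
  proof (intro allI impI)
    fix z assume z: "inU z" "rk x \<le> rk z" "z \<noteq> x"
    have "lev z \<ge> m" using z(2) rk_lev[of z] Pd by auto
    moreover have "lev z = m \<Longrightarrow> LE z (Pc m k)" using z x Pd
      by (cases z) (auto simp: LE_def SL_def)
    ultimately show "LE z (Pc m k)" using z x Pd far[of z "Pc m k"] by (cases "lev z = m") auto
  qed
  moreover have "\<not> LE x (Pc m k)" using Pd by (auto simp: LE_def SL_def)
  ultimately show ?thesis using Pd x by (intro exI[of _ "Pc m k"] exI[of _ "Pc m k"]) auto
next
  case (Pea m k)
  have "\<forall>z. inU z \<longrightarrow> rk x \<le> rk z \<longrightarrow> z \<noteq> x \<longrightarrow> LE z (Pd m k) \<or> LE z (Pb m)"
  proof (intro allI impI)
    fix z assume z: "inU z" "rk x \<le> rk z" "z \<noteq> x"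
    have "lev z \<ge> m" using z(2) rk_lev[of z] Pea by auto
    moreover have "lev z = m \<Longrightarrow> LE z (Pd m k) \<or> LE z (Pb m)" using z x Pea
      by (cases z) (auto simp: LE_def SL_def)
    ultimately show "LE z (Pd m k) \<or> LE z (Pb m)" using z x Pea far[of z "Pd m k"] by (cases "lev z = m") auto
  qed
  moreover have "\<not> LE x (Pd m k)" "\<not> LE x (Pb m)" using Pea by (auto simp: LE_def SL_def)
  ultimately show ?thesis using Pea x by (intro exI[of _ "Pd m k"] exI[of _ "Pb m"]) auto
next
  case (Peb m k)
  have "\<forall>z. inU z \<longrightarrow> rk x \<le> rk z \<longrightarrow> z \<noteq> x \<longrightarrow> LE z (Pd m k) \<or> LE z (Pa m)"
  proof (intro allI impI)
    fix z assume z: "inU z" "rk x \<le> rk z" "z \<noteq> x"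
    have "lev z \<ge> m" using z(2) rk_lev[of z] Peb by auto
    moreover have "lev z = m \<Longrightarrow> LE z (Pd m k) \<or> LE z (Pa m)" using z x Peb
      by (cases z) (auto simp: LE_def SL_def)
    ultimately show "LE z (Pd m k) \<or> LE z (Pa m)" using z x Peb far[of z "Pd m k"] by (cases "lev z = m") auto
  qed
  moreover have "\<not> LE x (Pd m k)" "\<not> LE x (Pa m)" using Peb by (auto simp: LE_def SL_def)
  ultimately show ?thesis using Peb x by (intro exI[of _ "Pd m k"] exI[of _ "Pa m"]) auto
qed


lemma N_pow: "k \<le> N \<longleftrightarrow> k < 2^(Suc n)"
proof -
  have p: "(0::nat) < 2^(Suc n)" by simp
  have "N = 2^(Suc n) - 1" by (simp add: NN_def del: power_Suc)
  thus ?thesis using p by linarith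
qed

lemma pow_le_N: "i \<le> n \<Longrightarrow> 2^i \<le> N"
proof -
  assume "i \<le> n"
  hence "(2::nat)^i < 2^(Suc n)" by (intro power_strict_increasing) auto
  thus ?thesis using N_pow by blast
qed

lemma some_bit: "1 \<le> j \<Longrightarrow> j \<le> N \<Longrightarrow> \<exists>i\<le>n. odd (j div 2^i)"
proof (rule ccontr)
  assume a: "1 \<le> j" "j \<le> N" "\<not> (\<exists>i\<le>n. odd (j div 2^i))"
  have "j = 0" by (rule bits_eq[of j n 0]) (use a N_pow in auto)
  thus False using a by simp
qed

lemma below_c0: assumes "inU z" "\<forall>j. z \<noteq> Pc 0 j" shows "\<exists>j. 1 \<le> j \<and> j \<le> N \<and> LE z (Pc 0 j)"
proof (cases "lev z = 0")
  case False
  hence "LE z (Pc 0 1)" using assms N_ge by (intro far) auto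
  thus ?thesis using N_ge by (intro exI[of _ 1]) auto
next
  case True
  show ?thesis
  proof (cases z)
    case (Pa m)
    obtain k1 k2 k3 where e: "sel s 0 = (k1,k2,k3)" by (metis prod.exhaust)
    note sp = sel_props[OF e]
    obtain j where j: "j = k1 \<or> j = k2" "1 \<le> j"
    proof (cases "k1 = 0")
      case True thus ?thesis using that[of k2] sp by auto
    next
      case False thus ?thesis using that[of k1] by auto
    qed
    have "LE z (Pc 0 j)" using Pa True e sp j by (auto simp: LE_def SL_def)
    thus ?thesis using j sp by blast
  next
    case (Pb m)
    obtain k1 k2 k3 where e: "sel s 0 = (k1,k2,k3)" by (metis prod.exhaust)
    note sp = sel_props[OF e]
    obtain j where j: "j = k1 \<or> j = k3" "1 \<le> j"
    proof (cases "k1 = 0")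
      case True thus ?thesis using that[of k3] sp by auto
    next
      case False thus ?thesis using that[of k1] by auto
    qed
    have "LE z (Pc 0 j)" using Pb True e sp j by (auto simp: LE_def SL_def)
    thus ?thesis using j sp by blast
  next
    case (Pd m k)
    obtain j::nat where j: "j = 1 \<or> j = 2" "j \<noteq> k" by (cases "k = 1") auto
    have jN: "j \<le> N" using j N_ge by auto
    have "SL z (Pc 0 j)" using Pd True j by (simp add: SL_def)
    hence "LE z (Pc 0 j)" using Pd True assms jN by (simp add: LE_def)
    moreover have "1 \<le> j" using j by auto
    ultimately show ?thesis using jN by blast
  next
    case (Pea m k)
    have "SL z (Pc 0 1)" using Pea True by (simp add: SL_def)
    hence "LE z (Pc 0 1)" using Pea True assms N_ge by (simp add: LE_def)
    thus ?thesis using N_ge by (intro exI[of _ 1]) auto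
  next
    case (Peb m k)
    have "SL z (Pc 0 1)" using Peb True by (simp add: SL_def)
    hence "LE z (Pc 0 1)" using Peb True assms N_ge by (simp add: LE_def)
    thus ?thesis using N_ge by (intro exI[of _ 1]) auto
  qed (use assms True in auto)
qed

lemma Gi_mem: "z \<in> Gi i \<longleftrightarrow> (\<exists>k. z = Pc 0 k \<and> k \<le> N \<and> odd (k div 2^i))"
  by (auto simp: Gi_def)

lemma down_Gi: "i \<le> n \<Longrightarrow> z \<in> Xn n \<Longrightarrow> (z \<in> downX n s (Gi i) \<longleftrightarrow> z = PBot \<or> (\<exists>k. k \<le> N \<and> odd (k div 2^i) \<and> LE z (Pc 0 k)))"
proof -
  assume i: "i \<le> n" and z: "z \<in> Xn n"
  have g: "Pc 0 (2^i) \<in> Gi i" using pow_le_N[OF i] by (auto simp: Gi_def)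
  have b: "leX n s PBot (Pc 0 (2^i))" using leX_bot pow_le_N[OF i] by (simp add: Xn_eq)
  show ?thesis
  proof
    assume "z \<in> downX n s (Gi i)"
    then obtain y where y: "y \<in> Gi i" "leX n s z y" by (auto simp: downX_def)
    then obtain k where k: "y = Pc 0 k" "k \<le> N" "odd (k div 2^i)" by (auto simp: Gi_def)
    show "z = PBot \<or> (\<exists>k. k \<le> N \<and> odd (k div 2^i) \<and> LE z (Pc 0 k))"
      using y(2) k unfolding leX_iff by blast
  next
    assume a: "z = PBot \<or> (\<exists>k. k \<le> N \<and> odd (k div 2^i) \<and> LE z (Pc 0 k))"
    show "z \<in> downX n s (Gi i)"
    proof (cases "z = PBot")
      case True thus ?thesis using g b unfolding downX_def by blast
    next
      case False
      then obtain k where k: "k \<le> N" "odd (k div 2^i)" "LE z (Pc 0 k)" using a by blast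
      hence "Pc 0 k \<in> Gi i" "leX n s z (Pc 0 k)" by (auto simp: Gi_def leX_iff)
      thus ?thesis unfolding downX_def by blast
    qed
  qed
qed

lemma sing_gen: assumes k: "k \<le> N" shows "{Pc 0 k} \<in> Gen"
proof -
  define F where "F i = (if odd (k div 2^i) then Gi i else Xn n - downX n s (Gi i))" for i
  have FG: "\<forall>i\<in>{..n}. F i \<in> Gen"
  proof
    fix i assume "i \<in> {..n}"
    hence g: "Gi i \<in> Gen" by (auto simp: GG_def intro: gen_base)
    have "Xn n - downX n s (Gi i - {}) \<in> Gen" using gen_imp'[OF g gen_empty] .
    thus "F i \<in> Gen" using g by (simp add: F_def)
  qed
  have "Xn n \<inter> \<Inter>(F ` {..n}) = {Pc 0 k}"
  proof
    show "{Pc 0 k} \<subseteq> Xn n \<inter> \<Inter>(F ` {..n})"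
    proof -
      have "Pc 0 k \<in> F i" if i: "i \<le> n" for i
      proof (cases "odd (k div 2^i)")
        case True thus ?thesis using k by (simp add: F_def Gi_def)
      next
        case False
        have "Pc 0 k \<in> Xn n" using k by (simp add: Xn_eq)
        moreover have "\<not> LE (Pc 0 k) (Pc 0 j)" if "odd (j div 2^i)" for j
          using that False by (auto simp: LE_def SL_def)
        ultimately show ?thesis using False down_Gi[OF i] by (auto simp: F_def)
      qed
      moreover have "Pc 0 k \<in> Xn n" using k by (simp add: Xn_eq)
      ultimately show ?thesis by auto
    qed
  next
    show "Xn n \<inter> \<Inter>(F ` {..n}) \<subseteq> {Pc 0 k}"
    proof
      fix z assume z: "z \<in> Xn n \<inter> \<Inter>(F ` {..n})"
      have notin: False if i: "i \<le> n" "z \<notin> Gi i" "z \<in> downX n s (Gi i)" for i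
      proof -
        have "z \<in> F i" using z i by auto
        thus False using i by (auto simp: F_def split: if_splits)
      qed
      obtain j where j: "z = Pc 0 j" "j \<le> N"
      proof (cases "z = PBot")
        case True
        have "PBot \<in> downX n s (Gi 0)" using down_Gi[of 0 PBot] by (simp add: Xn_eq)
        moreover have "PBot \<notin> Gi 0" by (simp add: Gi_def)
        ultimately show ?thesis using notin[of 0] True by auto
      next
        case False
        hence iz: "inU z" using z by (auto simp: Xn_eq)
        show ?thesis
        proof (cases "\<exists>j. z = Pc 0 j")
          case True thus ?thesis using that iz by auto
        next
          case False
          then obtain j where j: "1 \<le> j" "j \<le> N" "LE z (Pc 0 j)" using below_c0[OF iz] by auto
          obtain i where i: "i \<le> n" "odd (j div 2^i)" using some_bit[OF j(1,2)] by auto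
          have "z \<in> downX n s (Gi i)" using down_Gi[OF i(1)] z i j by auto
          moreover have "z \<notin> Gi i" using False by (auto simp: Gi_def)
          ultimately show ?thesis using notin i by blast
        qed
      qed
      have "\<forall>i\<le>n. odd (j div 2^i) = odd (k div 2^i)"
      proof (intro allI impI)
        fix i assume i: "i \<le> n"
        have zi: "z \<in> F i" using z i by auto
        show "odd (j div 2^i) = odd (k div 2^i)"
        proof
          assume "odd (j div 2^i)"
          hence "z \<in> downX n s (Gi i)" using down_Gi[OF i] j z LE_refl by auto
          thus "odd (k div 2^i)" using zi by (auto simp: F_def split: if_splits)
        next
          assume "odd (k div 2^i)"
          thus "odd (j div 2^i)" using zi j by (auto simp: F_def Gi_def)
        qed
      qed
      hence "j = k" using bits_eq[of j n k] j k N_pow by auto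
      thus "z \<in> {Pc 0 k}" using j by simp
    qed
  qed
  moreover have "Xn n \<inter> \<Inter>(F ` {..n}) \<in> Gen" using FG by (intro gen_INT) auto
  ultimately show ?thesis by simp
qed


lemma all_up: "\<forall>x. inU x \<longrightarrow> rk x < r \<longrightarrow> up x \<in> Gen"
proof (induction r)
  case 0 show ?case by simp
next
  case (Suc r)
  show ?case
  proof (intro allI impI)
    fix x assume x: "inU x" "rk x < Suc r"
    show "up x \<in> Gen"
    proof (cases "rk x < r")
      case True thus ?thesis using Suc.IH x by blast
    next
      case False
      hence IH: "\<forall>y. inU y \<longrightarrow> rk y < rk x \<longrightarrow> up y \<in> Gen" using Suc.IH x by auto
      show ?thesis
      proof (cases "\<exists>k. x = Pc 0 k")
        case True
        then obtain k where k: "x = Pc 0 k" by blast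
        have kN: "k \<le> N" using k x by simp
        have "up x = {Pc 0 k}"
        proof
          show "up x \<subseteq> {Pc 0 k}" using maxc k by (auto simp: up_def)
          show "{Pc 0 k} \<subseteq> up x" using k kN leX_refl by (auto simp: up_def Xn_eq)
        qed
        thus ?thesis using sing_gen[OF kN] by simp
      next
        case False
        then obtain w1 w2 where w: "inU w1" "inU w2" "rk w1 < rk x" "rk w2 < rk x" "\<not> LE x w1" "\<not> LE x w2"
          and cov: "\<forall>z. inU z \<longrightarrow> rk x \<le> rk z \<longrightarrow> z \<noteq> x \<longrightarrow> LE z w1 \<or> LE z w2"
          using Tcase x(1) by blast
        define R where "R = {z. inU z \<and> rk z < rk x}"
        have hNEG: "Xn n - downX n s {w} \<in> Gen" if "inU w" "rk w < rk x" for w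
        proof (rule gen_NEG[OF that(1)])
          show "\<forall>y. LE w y \<longrightarrow> up y \<in> Gen"
          proof (intro allI impI)
            fix y assume wy: "LE w y"
            have "inU y" using wy by (simp add: LE_def)
            moreover have "rk y < rk x" using LE_rk'[OF wy] that(2) by linarith
            ultimately show "up y \<in> Gen" using IH by blast
          qed
        qed
        let ?T = "(Xn n - downX n s {w1}) \<inter> (Xn n - downX n s {w2})"
        have T: "?T \<in> Gen" using hNEG w by (intro gen_Int) auto
        have R: "R \<in> Gen" unfolding R_def
        proof (rule gen_upset)
          show "finite {z. inU z \<and> rk z < rk x}" by (rule finite_rk)
          show "\<forall>y\<in>{z. inU z \<and> rk z < rk x}. inU y \<and> up y \<in> Gen" using IH by blast
          show "\<forall>y\<in>{z. inU z \<and> rk z < rk x}. \<forall>z. LE y z \<longrightarrow> z \<in> {z. inU z \<and> rk z < rk x}"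
          proof (intro ballI allI impI)
            fix y z assume y: "y \<in> {z. inU z \<and> rk z < rk x}" and yz: "LE y z"
            have "inU z" using yz by (simp add: LE_def)
            moreover have "rk z < rk x" using LE_rk'[OF yz] y by simp
            ultimately show "z \<in> {z. inU z \<and> rk z < rk x}" by simp
          qed
        qed
        have VR: "up x - {x} \<subseteq> R"
        proof
          fix y assume "y \<in> up x - {x}"
          hence "LE x y" "y \<noteq> x" using x(1) by (auto simp: up_eq)
          thus "y \<in> R" using LE_rk[of x y] by (auto simp: R_def LE_def)
        qed
        have V: "up x - {x} \<in> Gen"
        proof (rule gen_upset)
          show "finite (up x - {x})" using up_finite[OF x(1)] by simp
          show "\<forall>y\<in>up x - {x}. inU y \<and> up y \<in> Gen" using VR IH by (auto simp: R_def)
          show "\<forall>y\<in>up x - {x}. \<forall>z. LE y z \<longrightarrow> z \<in> up x - {x}"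
          proof (intro ballI allI impI)
            fix y z assume y: "y \<in> up x - {x}" and yz: "LE y z"
            have wy: "LE x y" "y \<noteq> x" using y x(1) by (auto simp: up_eq)
            hence "LE x z" using yz LE_trans by blast
            moreover have "z \<noteq> x" using wy yz LE_antisym by blast
            ultimately show "z \<in> up x - {x}" using x(1) by (simp add: up_eq)
          qed
        qed
        have xX: "x \<in> Xn n" using x(1) by (simp add: Xn_eq)
        have xT: "x \<in> ?T"
        proof -
          have "\<not> leX n s x w1" "\<not> leX n s x w2" using w x(1) by (auto simp: leX_iff)
          thus ?thesis using xX by (auto simp: downX_def)
        qed
        have Tsub: "\<forall>z\<in>?T. z \<in> R \<or> z = x"
        proof
          fix z assume z: "z \<in> ?T"
          hence zX: "z \<in> Xn n" and n1: "\<not> leX n s z w1" and n2: "\<not> leX n s z w2"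
            by (auto simp: downX_def)
          have "z \<noteq> PBot" using n1 w(1) leX_bot by (auto simp: Xn_eq)
          hence iz: "inU z" using zX by (simp add: Xn_eq)
          show "z \<in> R \<or> z = x"
          proof (rule ccontr)
            assume "\<not> (z \<in> R \<or> z = x)"
            hence "rk x \<le> rk z" "z \<noteq> x" using iz by (auto simp: R_def)
            hence "LE z w1 \<or> LE z w2" using cov iz by blast
            thus False using n1 n2 by (auto simp: leX_iff)
          qed
        qed
        have "x \<notin> R" by (simp add: R_def)
        show ?thesis by (rule key[OF T xT Tsub \<open>x \<notin> R\<close> R x(1) VR V])
      qed
    qed
  qed
qed

lemma up_gen: "inU x \<Longrightarrow> up x \<in> Gen"
proof -
  assume x: "inU x"
  have "rk x < Suc (rk x)" by simp
  thus ?thesis using all_up[of "Suc (rk x)"] x by blast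
qed

lemma gen_eq: "Gen = hcar A"
proof
  show "Gen \<subseteq> hcar A" by (rule Gen_hcar)
  show "hcar A \<subseteq> Gen"
  proof
    fix U assume U: "U \<in> hcar A"
    show "U \<in> Gen"
    proof (cases "U = Xn n")
      case True thus ?thesis using gen_Xn by simp
    next
      case False
      have f: "finite U" "PBot \<notin> U" and u: "upsetX n s U" using U False unfolding hcar_iff by auto
      have iU: "\<forall>y\<in>U. inU y" using u f by (auto simp: upsetX_def Xn_eq)
      show ?thesis
      proof (rule gen_upset[OF f(1)])
        show "\<forall>y\<in>U. inU y \<and> up y \<in> Gen" using iU up_gen by blast
        show "\<forall>y\<in>U. \<forall>z. LE y z \<longrightarrow> z \<in> U"
        proof (intro ballI allI impI)
          fix y z assume y: "y \<in> U" and yz: "LE y z"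
          hence "leX n s y z" by (simp add: leX_iff)
          thus "z \<in> U" using u y unfolding upsetX_def by blast
        qed
      qed
    qed
  qed
qed

lemma hcar_infinite: "infinite (hcar A)"
proof
  assume fin: "finite (hcar A)"
  have "up ` {z. inU z} \<subseteq> hcar A" using up_hcar by blast
  hence "finite (up ` {z. inU z})" using fin finite_subset by blast
  moreover have "inj_on up {z. inU z}"
  proof (rule inj_onI)
    fix x y assume x: "x \<in> {z. inU z}" and y: "y \<in> {z. inU z}" and e: "up x = up y"
    have "y \<in> up y" "x \<in> up x" using x y LE_refl by (auto simp: up_eq)
    hence "LE x y" "LE y x" using e x y by (auto simp: up_eq)
    thus "x = y" by (rule LE_antisym)
  qed
  ultimately have "finite {z. inU z}" using finite_imageD by blast
  thus False using inU_infinite by simp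
qed

lemma card_GG: "card GG = n + 1"
proof -
  have "inj_on Gi {..n}"
  proof (rule inj_onI)
    fix i i' assume i: "i \<in> {..n}" and i': "i' \<in> {..n}" and e: "Gi i = Gi i'"
    have "Pc 0 (2^i) \<in> Gi i" using pow_le_N i by (auto simp: Gi_def)
    hence "Pc 0 (2^i) \<in> Gi i'" using e by simp
    hence "odd ((2::nat)^i div 2^i')" by (auto simp: Gi_def)
    thus "i = i'" by (rule pow_div_odd)
  qed
  thus ?thesis unfolding GG_def by (simp add: card_image)
qed

lemma main: "infinite (hcar A) \<and> (\<exists>G. G \<subseteq> hcar A \<and> card G = n + 1 \<and> generated A G = hcar A)
   \<and> \<not> variety_locally_finite A"
proof (intro conjI)
  show "infinite (hcar A)" by (rule hcar_infinite)
  show "\<exists>G. G \<subseteq> hcar A \<and> card G = n + 1 \<and> generated A G = hcar A"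
    by (intro exI[of _ GG] conjI GG_hcar card_GG gen_eq)
  have "in_variety A A" using is_alg_A by (simp add: in_variety_def)
  moreover have "finitely_generated A"
  proof -
    have "finite GG" by (simp add: GG_def)
    thus ?thesis unfolding finitely_generated_def by (intro exI[of _ GG] conjI GG_hcar gen_eq)
  qed
  ultimately show "\<not> variety_locally_finite A"
    unfolding variety_locally_finite_def using hcar_infinite by (auto intro!: exI[of _ A])
qed

end

theorem mainTheorem7:
  fixes n :: nat and s :: "(nat \<times> nat \<times> nat) list"
  assumes "n \<ge> 2" and "distinct s" and "set s = Tn n"
  shows "infinite (hcar (Xstar n s))
         \<and> (\<exists>G. G \<subseteq> hcar (Xstar n s) \<and> card G = n + 1
                 \<and> generated (Xstar n s) G = hcar (Xstar n s))
         \<and> \<not> variety_locally_finite (Xstar n s)"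
proof -
  interpret abom n s using assms by unfold_locales auto
  show ?thesis by (rule main)
qed

end
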